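(* Let $\alpha$ be a proper fraction ($0<\alpha<1$) and let $u=(u_k)$ be a sequence with $u_k\neq 0$ for all $k\in\mathbb{N}$. Then the sequence spaces $$c_0(\Gamma,\Delta^{(\alpha)},u)=\Big\{x\in\omega:\Big(\sum_{j=0}^k u_j\Delta^{(\alpha)}x_j\Big)_{k\in\mathbb{N}}\in c_0\Big\},\qquad c(\Gamma,\Delta^{(\alpha)},u)=\Big\{x\in\omega:\Big(\sum_{j=0}^k u_j\Delta^{(\alpha)}x_j\Big)_{k\in\mathbb{N}}\in c\Big\}$$ are BK-spaces with the norm $$\|x\|_{c_0(\Gamma,\Delta^{(\alpha)},u)}=\|x\|_{c(\Gamma,\Delta^{(\alpha)},u)}=\sup_k\Big|\sum_{j=0}^k u_j\Delta^{(\alpha)}x_j\Big|.$$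
   Context: $\omega$ denotes the space of all real or complex sequences, $c$ the space of convergent sequences and $c_0$ the space of null sequences; $\mathbb{N}=\{0,1,2,\dots\}$. For $x=(x_k)\in\omega$ the fractional difference operator is $\Delta^{(\alpha)}x_k=\sum_{i=0}^{\infty}(-1)^i\frac{\Gamma(\alpha+1)}{i!\,\Gamma(\alpha+1-i)}x_{k-i}$, where $\Gamma$ is the gamma function and $x_j=0$ for $j<0$ (so the sum is finite). A BK-space is a Banach sequence space on which every coordinate functional $x\mapsto x_k$ is continuous. *)

theory Defs
  imports "HOL-Analysis.Analysis"
begin

definition frac_coef :: "real \<Rightarrow> nat \<Rightarrow> real" where
  "frac_coef \<alpha> i = (-1) ^ i * Gamma (\<alpha> + 1) / (fact i * Gamma (\<alpha> + 1 - real i))"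

text \<open>Fractional difference; terms with negative index vanish, so the sum is finite.\<close>
definition frac_diff :: "real \<Rightarrow> (nat \<Rightarrow> 'a::real_normed_field) \<Rightarrow> nat \<Rightarrow> 'a" where
  "frac_diff \<alpha> x k = (\<Sum>i\<le>k. of_real (frac_coef \<alpha> i) * x (k - i))"

definition gamma_seq :: "real \<Rightarrow> (nat \<Rightarrow> 'a::real_normed_field) \<Rightarrow> (nat \<Rightarrow> 'a) \<Rightarrow> nat \<Rightarrow> 'a" where
  "gamma_seq \<alpha> u x k = (\<Sum>j\<le>k. u j * frac_diff \<alpha> x j)"

definition c0_GD :: "real \<Rightarrow> (nat \<Rightarrow> 'a::real_normed_field) \<Rightarrow> (nat \<Rightarrow> 'a) set" where
  "c0_GD \<alpha> u = {x. gamma_seq \<alpha> u x \<longlonglongrightarrow> 0}"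

definition c_GD :: "real \<Rightarrow> (nat \<Rightarrow> 'a::real_normed_field) \<Rightarrow> (nat \<Rightarrow> 'a) set" where
  "c_GD \<alpha> u = {x. convergent (gamma_seq \<alpha> u x)}"

definition GD_norm :: "real \<Rightarrow> (nat \<Rightarrow> 'a::real_normed_field) \<Rightarrow> (nat \<Rightarrow> 'a) \<Rightarrow> real" where
  "GD_norm \<alpha> u x = (SUP k. norm (gamma_seq \<alpha> u x k))"

definition BK_space :: "(nat \<Rightarrow> 'a::real_normed_field) set \<Rightarrow> ((nat \<Rightarrow> 'a) \<Rightarrow> real) \<Rightarrow> bool" where
  "BK_space X N \<longleftrightarrow>
     (\<lambda>k. 0) \<in> X \<and>
     (\<forall>x\<in>X. \<forall>y\<in>X. (\<lambda>k. x k + y k) \<in> X) \<and>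
     (\<forall>c. \<forall>x\<in>X. (\<lambda>k. c * x k) \<in> X) \<and>
     (\<forall>x\<in>X. 0 \<le> N x \<and> (N x = 0 \<longleftrightarrow> x = (\<lambda>k. 0))) \<and>
     (\<forall>c. \<forall>x\<in>X. N (\<lambda>k. c * x k) = norm c * N x) \<and>
     (\<forall>x\<in>X. \<forall>y\<in>X. N (\<lambda>k. x k + y k) \<le> N x + N y) \<and>
     (\<forall>f. (\<forall>n. f n \<in> X) \<and> (\<forall>e>0. \<exists>M. \<forall>m\<ge>M. \<forall>n\<ge>M. N (\<lambda>k. f m k - f n k) < e)
          \<longrightarrow> (\<exists>x\<in>X. (\<lambda>n. N (\<lambda>k. f n k - x k)) \<longlonglongrightarrow> 0)) \<and>
     (\<forall>k. \<forall>f. \<forall>x\<in>X. (\<forall>n. f n \<in> X) \<and> (\<lambda>n. N (\<lambda>j. f n j - x j)) \<longlonglongrightarrow> 0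
          \<longrightarrow> (\<lambda>n. f n k) \<longlonglongrightarrow> x k)"

end

theory Submission
  imports Defs
begin

context
  fixes \<alpha> :: real and u :: "nat \<Rightarrow> 'a::{real_normed_field, banach}"
  assumes apos: "0 < \<alpha>" and unz: "\<forall>k. u k \<noteq> 0"
begin

lemma g_add: "gamma_seq \<alpha> u (\<lambda>k. x k + y k) k = gamma_seq \<alpha> u x k + gamma_seq \<alpha> u y k"
  by (simp add: gamma_seq_def frac_diff_def distrib_left sum.distrib)

lemma g_diff: "gamma_seq \<alpha> u (\<lambda>k. x k - y k) k = gamma_seq \<alpha> u x k - gamma_seq \<alpha> u y k"
  by (simp add: gamma_seq_def frac_diff_def right_diff_distrib sum_subtractf)

lemma g_scale: "gamma_seq \<alpha> u (\<lambda>k. c * x k) k = c * gamma_seq \<alpha> u x k"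
  by (simp add: gamma_seq_def frac_diff_def sum_distrib_left mult.left_commute)

lemma g_add_fun: "gamma_seq \<alpha> u (\<lambda>k. x k + y k) = (\<lambda>k. gamma_seq \<alpha> u x k + gamma_seq \<alpha> u y k)"
  by (rule ext) (rule g_add)

lemma g_scale_fun: "gamma_seq \<alpha> u (\<lambda>k. c * x k) = (\<lambda>k. c * gamma_seq \<alpha> u x k)"
  by (rule ext) (rule g_scale)

lemma g_zero: "gamma_seq \<alpha> u (\<lambda>k. 0) k = 0"
  by (simp add: gamma_seq_def frac_diff_def)

lemma bdd_c: "x \<in> c_GD \<alpha> u \<Longrightarrow> bdd_above (range (\<lambda>k. norm (gamma_seq \<alpha> u x k)))"
proof -
  assume "x \<in> c_GD \<alpha> u"
  then obtain K where "\<forall>n. norm (gamma_seq \<alpha> u x n) \<le> K"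
    unfolding c_GD_def by (auto dest!: convergent_imp_Bseq simp: Bseq_def)
  then show ?thesis by (intro bdd_aboveI2[where M=K]) auto
qed

lemma norm_le_N: "bdd_above (range (\<lambda>k. norm (gamma_seq \<alpha> u x k))) \<Longrightarrow>
   norm (gamma_seq \<alpha> u x k) \<le> GD_norm \<alpha> u x"
  unfolding GD_norm_def by (rule cSUP_upper) auto

lemma N_le: "(\<And>k. norm (gamma_seq \<alpha> u x k) \<le> B) \<Longrightarrow> GD_norm \<alpha> u x \<le> B"
  unfolding GD_norm_def by (rule cSUP_least) auto

lemma N_nonneg: "bdd_above (range (\<lambda>k. norm (gamma_seq \<alpha> u x k))) \<Longrightarrow> 0 \<le> GD_norm \<alpha> u x"
  using norm_le_N[of x 0] norm_ge_zero order_trans by blast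

lemma coef0: "frac_coef \<alpha> 0 = 1"
proof -
  have "Gamma (\<alpha> + 1) > 0" using apos by (intro Gamma_real_pos) simp
  then show ?thesis by (simp add: frac_coef_def)
qed

lemma ud_bound:
  assumes "bdd_above (range (\<lambda>j. norm (gamma_seq \<alpha> u x j)))"
  shows "norm (frac_diff \<alpha> x k) \<le> (2 / norm (u k)) * GD_norm \<alpha> u x"
proof -
  have "norm (u k * frac_diff \<alpha> x k) \<le> 2 * GD_norm \<alpha> u x"
  proof (cases k)
    case 0
    then have "u k * frac_diff \<alpha> x k = gamma_seq \<alpha> u x 0" by (simp add: gamma_seq_def)
    then show ?thesis using norm_le_N[OF assms, of 0] N_nonneg[OF assms] by simp
  next
    case (Suc m)
    then have "u k * frac_diff \<alpha> x k = gamma_seq \<alpha> u x k - gamma_seq \<alpha> u x m"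
      by (simp add: gamma_seq_def)
    then have "norm (u k * frac_diff \<alpha> x k) \<le> norm (gamma_seq \<alpha> u x k) + norm (gamma_seq \<alpha> u x m)"
      by (simp add: norm_triangle_ineq4)
    then show ?thesis using norm_le_N[OF assms, of k] norm_le_N[OF assms, of m] by simp
  qed
  moreover have "norm (u k) > 0" using unz by simp
  ultimately show ?thesis by (simp add: norm_mult field_simps mult.commute)
qed

lemma coord_bound:
  "\<exists>C\<ge>0. \<forall>x. bdd_above (range (\<lambda>j. norm (gamma_seq \<alpha> u x j))) \<longrightarrow>
       norm (x k) \<le> C * GD_norm \<alpha> u x"
proof (induction k rule: less_induct)
  case (less k)
  show ?case
  proof (cases k)
    case 0
    show ?thesis
    proof (intro exI[of _ "2 / norm (u 0)"] conjI allI impI)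
      fix x assume b: "bdd_above (range (\<lambda>j. norm (gamma_seq \<alpha> u x j)))"
      have "frac_diff \<alpha> x 0 = x 0" by (simp add: frac_diff_def coef0)
      then show "norm (x k) \<le> 2 / norm (u 0) * GD_norm \<alpha> u x" using ud_bound[OF b, of 0] 0 by simp
    qed simp
  next
    case (Suc m)
    have "\<forall>i. \<exists>C. i < k \<longrightarrow> (C \<ge> 0 \<and> (\<forall>x. bdd_above (range (\<lambda>j. norm (gamma_seq \<alpha> u x j))) \<longrightarrow>
       norm (x i) \<le> C * GD_norm \<alpha> u x))" using less by blast
    then obtain Cf where Cf: "\<And>i. i < k \<Longrightarrow> Cf i \<ge> 0 \<and> (\<forall>x. bdd_above (range (\<lambda>j. norm (gamma_seq \<alpha> u x j))) \<longrightarrow>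
       norm (x i) \<le> Cf i * GD_norm \<alpha> u x)" by metis
    define C where "C = 2 / norm (u k) + (\<Sum>i\<le>m. \<bar>frac_coef \<alpha> (Suc i)\<bar> * Cf (m - i))"
    show ?thesis
    proof (intro exI[of _ C] conjI allI impI)
      show "C \<ge> 0" unfolding C_def using Cf Suc by (intro add_nonneg_nonneg sum_nonneg) auto
      fix x assume b: "bdd_above (range (\<lambda>j. norm (gamma_seq \<alpha> u x j)))"
      have fd: "frac_diff \<alpha> x k = x k + (\<Sum>i\<le>m. of_real (frac_coef \<alpha> (Suc i)) * x (m - i))"
        unfolding frac_diff_def Suc sum.atMost_Suc_shift by (simp add: coef0)
      have "norm (x k) \<le> norm (frac_diff \<alpha> x k) + norm (\<Sum>i\<le>m. of_real (frac_coef \<alpha> (Suc i)) * x (m - i))"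
        using fd by (metis add_diff_cancel_right' norm_triangle_ineq4)
      also have "\<dots> \<le> (2 / norm (u k)) * GD_norm \<alpha> u x + (\<Sum>i\<le>m. \<bar>frac_coef \<alpha> (Suc i)\<bar> * (Cf (m - i) * GD_norm \<alpha> u x))"
      proof (rule add_mono[OF ud_bound[OF b]])
        have "norm (\<Sum>i\<le>m. of_real (frac_coef \<alpha> (Suc i)) * x (m - i)) \<le> (\<Sum>i\<le>m. norm (of_real (frac_coef \<alpha> (Suc i)) * x (m - i)))"
          by (rule norm_sum)
        also have "\<dots> \<le> (\<Sum>i\<le>m. \<bar>frac_coef \<alpha> (Suc i)\<bar> * (Cf (m - i) * GD_norm \<alpha> u x))"
        proof (rule sum_mono)
          fix i assume "i \<in> {..m}"
          then have "m - i < k" using Suc by auto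
          then have "norm (x (m - i)) \<le> Cf (m - i) * GD_norm \<alpha> u x" using Cf b by blast
          then show "norm (of_real (frac_coef \<alpha> (Suc i)) * x (m - i)) \<le> \<bar>frac_coef \<alpha> (Suc i)\<bar> * (Cf (m - i) * GD_norm \<alpha> u x)"
            by (simp add: norm_mult mult_left_mono)
        qed
        finally show "norm (\<Sum>i\<le>m. of_real (frac_coef \<alpha> (Suc i)) * x (m - i)) \<le> (\<Sum>i\<le>m. \<bar>frac_coef \<alpha> (Suc i)\<bar> * (Cf (m - i) * GD_norm \<alpha> u x))" .
      qed
      also have "\<dots> = C * GD_norm \<alpha> u x"
        unfolding C_def by (simp add: distrib_right sum_distrib_right mult.assoc)
      finally show "norm (x k) \<le> C * GD_norm \<alpha> u x" .
    qed
  qed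
qed

lemma BK_general:
  assumes sub: "X \<subseteq> c_GD \<alpha> u" and z: "(\<lambda>k. 0) \<in> X"
    and ad: "\<forall>x\<in>X. \<forall>y\<in>X. (\<lambda>k. x k + y k) \<in> X"
    and sc: "\<forall>c. \<forall>x\<in>X. (\<lambda>k. c * x k) \<in> X"
    and cl: "\<And>x. (\<forall>e>0. \<exists>y\<in>X. \<forall>k. norm (gamma_seq \<alpha> u x k - gamma_seq \<alpha> u y k) \<le> e) \<Longrightarrow> x \<in> X"
  shows "BK_space X (GD_norm \<alpha> u)"
proof -
  let ?g = "gamma_seq \<alpha> u" and ?N = "GD_norm \<alpha> u"
  have bd: "\<And>x. x \<in> X \<Longrightarrow> bdd_above (range (\<lambda>k. norm (?g x k)))" using sub bdd_c by (meson subsetD)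
  have di: "\<And>x y. x \<in> X \<Longrightarrow> y \<in> X \<Longrightarrow> (\<lambda>k. x k - y k) \<in> X"
  proof -
    fix x y assume "x \<in> X" "y \<in> X"
    have yy: "(\<lambda>k. (-1) * y k) \<in> X" using sc \<open>y \<in> X\<close> by blast
    have "(\<lambda>k. x k + (\<lambda>k. (-1) * y k) k) \<in> X" by (rule ad[rule_format, OF \<open>x \<in> X\<close> yy])
    then have "(\<lambda>k. x k + (-1) * y k) \<in> X" by simp
    then show "(\<lambda>k. x k - y k) \<in> X" by simp
  qed
  have "\<forall>k. \<exists>C\<ge>0. \<forall>x. bdd_above (range (\<lambda>j. norm (?g x j))) \<longrightarrow> norm (x k) \<le> C * ?N x"
    using coord_bound by blast
  then have "\<exists>Cb. \<forall>k. Cb k \<ge> 0 \<and> (\<forall>x. bdd_above (range (\<lambda>j. norm (?g x j))) \<longrightarrow> norm (x k) \<le> Cb k * ?N x)"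
    by (rule choice)
  then obtain Cb where Cbh: "\<forall>k. Cb k \<ge> 0 \<and> (\<forall>x. bdd_above (range (\<lambda>j. norm (?g x j))) \<longrightarrow> norm (x k) \<le> Cb k * ?N x)"
    by (rule exE)
  have Cb0: "\<And>k. Cb k \<ge> 0" using Cbh by simp
  have Cb: "\<And>k x. bdd_above (range (\<lambda>j. norm (?g x j))) \<Longrightarrow> norm (x k) \<le> Cb k * ?N x"
    using Cbh by simp
  have N0: "?N (\<lambda>k. 0) = 0" by (simp add: GD_norm_def g_zero)
  have A: "\<forall>x\<in>X. 0 \<le> ?N x \<and> (?N x = 0 \<longleftrightarrow> x = (\<lambda>k. 0))"
  proof
    fix x assume x: "x \<in> X"
    show "0 \<le> ?N x \<and> (?N x = 0 \<longleftrightarrow> x = (\<lambda>k. 0))"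
    proof (intro conjI iffI)
      show "0 \<le> ?N x" by (rule N_nonneg[OF bd[OF x]])
      assume "?N x = 0"
      then show "x = (\<lambda>k. 0)" using Cb[OF bd[OF x]] by (intro ext) simp
    next
      assume "x = (\<lambda>k. 0)" then show "?N x = 0" using N0 by simp
    qed
  qed
  have B: "\<forall>c. \<forall>x\<in>X. ?N (\<lambda>k. c * x k) = norm c * ?N x"
  proof (intro allI ballI)
    fix c and x assume x: "x \<in> X"
    have cx: "(\<lambda>k. c * x k) \<in> X" using sc x by blast
    show "?N (\<lambda>k. c * x k) = norm c * ?N x"
    proof (cases "c = 0")
      case True then show ?thesis using N0 by simp
    next
      case False
      have le1: "?N (\<lambda>k. c * x k) \<le> norm c * ?N x"
        by (rule N_le) (simp add: g_scale norm_mult mult_left_mono norm_le_N[OF bd[OF x]])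
      have "?N x \<le> ?N (\<lambda>k. c * x k) / norm c"
      proof (rule N_le)
        fix k
        have "norm c * norm (?g x k) \<le> ?N (\<lambda>k. c * x k)"
          using norm_le_N[OF bd[OF cx], of k] by (simp add: g_scale norm_mult)
        then show "norm (?g x k) \<le> ?N (\<lambda>k. c * x k) / norm c" using False
          by (simp add: field_simps mult.commute)
      qed
      then have "norm c * ?N x \<le> ?N (\<lambda>k. c * x k)" using False by (simp add: field_simps mult.commute)
      then show ?thesis using le1 by simp
    qed
  qed
  have C: "\<forall>x\<in>X. \<forall>y\<in>X. ?N (\<lambda>k. x k + y k) \<le> ?N x + ?N y"
  proof (intro ballI)
    fix x y assume x: "x \<in> X" and y: "y \<in> X"
    show "?N (\<lambda>k. x k + y k) \<le> ?N x + ?N y"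
    proof (rule N_le)
      fix k
      have "norm (?g (\<lambda>k. x k + y k) k) \<le> norm (?g x k) + norm (?g y k)"
        by (simp add: g_add norm_triangle_ineq)
      then show "norm (?g (\<lambda>k. x k + y k) k) \<le> ?N x + ?N y"
        using norm_le_N[OF bd[OF x], of k] norm_le_N[OF bd[OF y], of k] by linarith
    qed
  qed
  have D: "\<forall>f. (\<forall>n. f n \<in> X) \<and> (\<forall>e>0. \<exists>M. \<forall>m\<ge>M. \<forall>n\<ge>M. ?N (\<lambda>k. f m k - f n k) < e)
          \<longrightarrow> (\<exists>x\<in>X. (\<lambda>n. ?N (\<lambda>k. f n k - x k)) \<longlonglongrightarrow> 0)"
  proof (intro allI impI, elim conjE)
    fix f :: "nat \<Rightarrow> nat \<Rightarrow> 'a" assume fX: "\<forall>n. f n \<in> X" and cau: "\<forall>e>0. \<exists>M. \<forall>m\<ge>M. \<forall>n\<ge>M. ?N (\<lambda>k. f m k - f n k) < e"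
    have bdiff: "\<And>m n. bdd_above (range (\<lambda>j. norm (?g (\<lambda>k. f m k - f n k) j)))"
      using bd[OF di[OF fX[rule_format] fX[rule_format]]] by simp
    have pc: "Cauchy (\<lambda>n. f n k)" for k
    proof (rule CauchyI)
      fix e :: real assume e: "e > 0"
      have "e / (Cb k + 1) > 0" using e Cb0[of k] by simp
      then obtain M where M: "\<forall>m\<ge>M. \<forall>n\<ge>M. ?N (\<lambda>k. f m k - f n k) < e / (Cb k + 1)"
        using cau by blast
      show "\<exists>M. \<forall>m\<ge>M. \<forall>n\<ge>M. norm (f m k - f n k) < e"
      proof (intro exI allI impI)
        fix m n assume "M \<le> m" "M \<le> n"
        then have h: "?N (\<lambda>k. f m k - f n k) < e / (Cb k + 1)" using M by blast
        have "norm (f m k - f n k) \<le> Cb k * ?N (\<lambda>k. f m k - f n k)"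
          by (rule Cb[OF bdiff])
        also have "\<dots> \<le> Cb k * (e / (Cb k + 1))" using h Cb0[of k] using mult_left_mono[OF less_imp_le[OF h] Cb0[of k]] by simp
        also have "\<dots> < e" using e Cb0[of k] by (simp add: field_simps)
        finally show "norm (f m k - f n k) < e" .
      qed
    qed
    define x where "x k = lim (\<lambda>n. f n k)" for k
    have fx: "(\<lambda>n. f n k) \<longlonglongrightarrow> x k" for k
      unfolding x_def by (rule convergent_LIMSEQ_iff[THEN iffD1, OF Cauchy_convergent[OF pc]])
    have gx: "(\<lambda>n. ?g (f n) k) \<longlonglongrightarrow> ?g x k" for k
      unfolding gamma_seq_def frac_diff_def by (intro tendsto_intros fx)
    have unif: "\<exists>M. \<forall>n\<ge>M. \<forall>k. norm (?g (f n) k - ?g x k) \<le> e" if e: "e > 0" for e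
    proof -
      obtain M where M: "\<forall>m\<ge>M. \<forall>n\<ge>M. ?N (\<lambda>k. f m k - f n k) < e" using cau e by blast
      show ?thesis
      proof (intro exI allI impI)
        fix n k assume n: "M \<le> n"
        have "(\<lambda>m. norm (?g (f n) k - ?g (f m) k)) \<longlonglongrightarrow> norm (?g (f n) k - ?g x k)"
          by (intro tendsto_norm tendsto_diff tendsto_const gx)
        moreover have "\<exists>N. \<forall>m\<ge>N. norm (?g (f n) k - ?g (f m) k) \<le> e"
        proof (intro exI allI impI)
          fix m assume "M \<le> m"
          then have "?N (\<lambda>k. f n k - f m k) < e" using M n by simp
          moreover have "norm (?g (\<lambda>k. f n k - f m k) k) \<le> ?N (\<lambda>k. f n k - f m k)"
            by (rule norm_le_N[OF bdiff])
          ultimately show "norm (?g (f n) k - ?g (f m) k) \<le> e" by (simp add: g_diff)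
        qed
        ultimately show "norm (?g (f n) k - ?g x k) \<le> e" by (rule LIMSEQ_le_const2)
      qed
    qed
    have xX: "x \<in> X"
    proof (rule cl, intro allI impI)
      fix e :: real assume "e > 0"
      then obtain M where M: "\<forall>n\<ge>M. \<forall>k. norm (?g (f n) k - ?g x k) \<le> e" using unif by blast
      have "\<forall>k. norm (?g x k - ?g (f M) k) \<le> e"
        using M by (simp add: norm_minus_commute)
      then show "\<exists>y\<in>X. \<forall>k. norm (?g x k - ?g y k) \<le> e" using fX by blast
    qed
    have "(\<lambda>n. ?N (\<lambda>k. f n k - x k)) \<longlonglongrightarrow> 0"
    proof (rule LIMSEQ_I)
      fix r :: real assume r: "r > 0"
      then obtain M where M: "\<forall>n\<ge>M. \<forall>k. norm (?g (f n) k - ?g x k) \<le> r / 2" using unif[of "r/2"] by auto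
      show "\<exists>no. \<forall>n\<ge>no. norm (?N (\<lambda>k. f n k - x k) - 0) < r"
      proof (intro exI allI impI)
        fix n assume n: "M \<le> n"
        have "?N (\<lambda>k. f n k - x k) \<le> r / 2" using M n by (intro N_le) (simp add: g_diff)
        moreover have "0 \<le> ?N (\<lambda>k. f n k - x k)" using N_nonneg[OF bd[OF di[OF fX[rule_format] xX]]] by simp
        ultimately show "norm (?N (\<lambda>k. f n k - x k) - 0) < r" using r by simp
      qed
    qed
    then show "\<exists>x\<in>X. (\<lambda>n. ?N (\<lambda>k. f n k - x k)) \<longlonglongrightarrow> 0" using xX by blast
  qed
  have E: "\<forall>k. \<forall>f. \<forall>x\<in>X. (\<forall>n. f n \<in> X) \<and> (\<lambda>n. ?N (\<lambda>j. f n j - x j)) \<longlonglongrightarrow> 0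
          \<longrightarrow> (\<lambda>n. f n k) \<longlonglongrightarrow> x k"
  proof (intro allI ballI impI, elim conjE)
    fix k and f :: "nat \<Rightarrow> nat \<Rightarrow> 'a" and x assume x: "x \<in> X" and fX: "\<forall>n. f n \<in> X" and lim: "(\<lambda>n. ?N (\<lambda>j. f n j - x j)) \<longlonglongrightarrow> 0"
    have "(\<lambda>n. f n k - x k) \<longlonglongrightarrow> 0"
    proof (rule Lim_null_comparison)
      show "\<forall>\<^sub>F n in sequentially. norm (f n k - x k) \<le> Cb k * ?N (\<lambda>j. f n j - x j)"
      proof (intro always_eventually allI)
        fix n
        have "(\<lambda>j. f n j - x j) \<in> X" using di[OF fX[rule_format] x] by simp
        then show "norm (f n k - x k) \<le> Cb k * ?N (\<lambda>j. f n j - x j)"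
          using Cb[OF bd[OF \<open>(\<lambda>j. f n j - x j) \<in> X\<close>]] by simp
      qed
      show "(\<lambda>n. Cb k * ?N (\<lambda>j. f n j - x j)) \<longlonglongrightarrow> 0"
        using tendsto_mult_right_zero[OF lim] by simp
    qed
    then show "(\<lambda>n. f n k) \<longlonglongrightarrow> x k" by (simp add: Lim_null[symmetric])
  qed
  show ?thesis unfolding BK_space_def
    apply (intro conjI)
           apply (rule z)
          apply (rule ad)
         apply (rule sc)
        apply (rule A)
       apply (rule B)
      apply (rule C)
     apply (rule D)
    apply (rule E)
    done
qed



lemma BK_c0: "BK_space (c0_GD \<alpha> u) (GD_norm \<alpha> u)"
proof (rule BK_general)
  show "c0_GD \<alpha> u \<subseteq> c_GD \<alpha> u" unfolding c0_GD_def c_GD_def convergent_def by auto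
  show "(\<lambda>k. 0) \<in> c0_GD \<alpha> u" unfolding c0_GD_def by (simp add: g_zero[abs_def])
  show "\<forall>x\<in>c0_GD \<alpha> u. \<forall>y\<in>c0_GD \<alpha> u. (\<lambda>k. x k + y k) \<in> c0_GD \<alpha> u"
  proof (intro ballI)
    fix x y assume "x \<in> c0_GD \<alpha> u" "y \<in> c0_GD \<alpha> u"
    then have "(\<lambda>k. gamma_seq \<alpha> u x k + gamma_seq \<alpha> u y k) \<longlonglongrightarrow> 0 + 0"
      unfolding c0_GD_def by (intro tendsto_add[where a=0 and b=0]) simp_all
    then show "(\<lambda>k. x k + y k) \<in> c0_GD \<alpha> u" unfolding c0_GD_def by (simp only: g_add_fun mem_Collect_eq add_0_left)
  qed
  show "\<forall>c. \<forall>x\<in>c0_GD \<alpha> u. (\<lambda>k. c * x k) \<in> c0_GD \<alpha> u"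
  proof (intro allI ballI)
    fix c x assume "x \<in> c0_GD \<alpha> u"
    then have x0: "gamma_seq \<alpha> u x \<longlonglongrightarrow> 0" unfolding c0_GD_def by simp
    have "(\<lambda>k. c * gamma_seq \<alpha> u x k) \<longlonglongrightarrow> 0" by (rule tendsto_mult_right_zero[OF x0])
    then show "(\<lambda>k. c * x k) \<in> c0_GD \<alpha> u" unfolding c0_GD_def by (simp only: g_scale_fun mem_Collect_eq)
  qed
  fix x assume h: "\<forall>e>0. \<exists>y\<in>c0_GD \<alpha> u. \<forall>k. norm (gamma_seq \<alpha> u x k - gamma_seq \<alpha> u y k) \<le> e"
  show "x \<in> c0_GD \<alpha> u" unfolding c0_GD_def mem_Collect_eq
  proof (rule LIMSEQ_I)
    fix r :: real assume r: "r > 0"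
    then have r2: "r/2 > 0" by simp
    then obtain y where yc: "y \<in> c0_GD \<alpha> u" and d: "\<forall>k. norm (gamma_seq \<alpha> u x k - gamma_seq \<alpha> u y k) \<le> r/2"
      using h by blast
    from yc have y: "gamma_seq \<alpha> u y \<longlonglongrightarrow> 0" unfolding c0_GD_def by simp
    obtain no where no: "\<forall>n\<ge>no. norm (gamma_seq \<alpha> u y n - 0) < r/2" using LIMSEQ_D[OF y r2] by blast
    show "\<exists>no. \<forall>n\<ge>no. norm (gamma_seq \<alpha> u x n - 0) < r"
    proof (intro exI allI impI)
      fix n assume "no \<le> n"
      then have "norm (gamma_seq \<alpha> u y n - 0) < r/2" using no by blast
      moreover have "norm (gamma_seq \<alpha> u x n) \<le> norm (gamma_seq \<alpha> u y n) + norm (gamma_seq \<alpha> u x n - gamma_seq \<alpha> u y n)"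
        by (rule norm_triangle_sub)
      moreover have "norm (gamma_seq \<alpha> u x n - 0) = norm (gamma_seq \<alpha> u x n)" by simp
      moreover have "norm (gamma_seq \<alpha> u y n - 0) = norm (gamma_seq \<alpha> u y n)" by simp
      moreover have "norm (gamma_seq \<alpha> u x n - gamma_seq \<alpha> u y n) \<le> r/2" using d by blast
      ultimately show "norm (gamma_seq \<alpha> u x n - 0) < r" by linarith
    qed
  qed
qed

lemma BK_c: "BK_space (c_GD \<alpha> u) (GD_norm \<alpha> u)"
proof (rule BK_general)
  show "c_GD \<alpha> u \<subseteq> c_GD \<alpha> u" by simp
  show "(\<lambda>k. 0) \<in> c_GD \<alpha> u" unfolding c_GD_def by (simp add: g_zero[abs_def] convergent_const)
  show "\<forall>x\<in>c_GD \<alpha> u. \<forall>y\<in>c_GD \<alpha> u. (\<lambda>k. x k + y k) \<in> c_GD \<alpha> u"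
  proof (intro ballI)
    fix x y assume "x \<in> c_GD \<alpha> u" "y \<in> c_GD \<alpha> u"
    then have cx: "convergent (gamma_seq \<alpha> u x)" and cy: "convergent (gamma_seq \<alpha> u y)"
      unfolding c_GD_def by simp_all
    have "convergent (\<lambda>k. gamma_seq \<alpha> u x k + gamma_seq \<alpha> u y k)" by (rule convergent_add[OF cx cy])
    then show "(\<lambda>k. x k + y k) \<in> c_GD \<alpha> u" unfolding c_GD_def by (simp only: g_add_fun mem_Collect_eq)
  qed
  show "\<forall>c. \<forall>x\<in>c_GD \<alpha> u. (\<lambda>k. c * x k) \<in> c_GD \<alpha> u"
  proof (intro allI ballI)
    fix c x assume "x \<in> c_GD \<alpha> u"
    then obtain L where L: "gamma_seq \<alpha> u x \<longlonglongrightarrow> L" unfolding c_GD_def convergent_def by blast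
    have "(\<lambda>k. c * gamma_seq \<alpha> u x k) \<longlonglongrightarrow> c * L" by (rule tendsto_mult_left[OF L])
    then have "convergent (\<lambda>k. c * gamma_seq \<alpha> u x k)" unfolding convergent_def by blast
    then show "(\<lambda>k. c * x k) \<in> c_GD \<alpha> u" unfolding c_GD_def by (simp only: g_scale_fun mem_Collect_eq)
  qed
  fix x assume h: "\<forall>e>0. \<exists>y\<in>c_GD \<alpha> u. \<forall>k. norm (gamma_seq \<alpha> u x k - gamma_seq \<alpha> u y k) \<le> e"
  have "Cauchy (gamma_seq \<alpha> u x)"
  proof (rule CauchyI)
    fix r :: real assume r: "r > 0"
    then obtain y where y: "convergent (gamma_seq \<alpha> u y)" and d: "\<forall>k. norm (gamma_seq \<alpha> u x k - gamma_seq \<alpha> u y k) \<le> r/4"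
      using h[rule_format, of "r/4"] unfolding c_GD_def by auto
    have "Cauchy (gamma_seq \<alpha> u y)" using y by (rule convergent_Cauchy)
    then obtain M where M: "\<forall>m\<ge>M. \<forall>n\<ge>M. norm (gamma_seq \<alpha> u y m - gamma_seq \<alpha> u y n) < r/4"
      using CauchyD[of "gamma_seq \<alpha> u y" "r/4"] r by auto
    show "\<exists>M. \<forall>m\<ge>M. \<forall>n\<ge>M. norm (gamma_seq \<alpha> u x m - gamma_seq \<alpha> u x n) < r"
    proof (intro exI allI impI)
      fix m n assume "M \<le> m" "M \<le> n"
      then have a: "norm (gamma_seq \<alpha> u y m - gamma_seq \<alpha> u y n) < r/4" using M by simp
      have b1: "norm (gamma_seq \<alpha> u x m - gamma_seq \<alpha> u y m) \<le> r/4" using d by blast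
      have b2: "norm (gamma_seq \<alpha> u y n - gamma_seq \<alpha> u x n) \<le> r/4"
        using d[rule_format, of n] by (simp add: norm_minus_commute)
      have "norm (gamma_seq \<alpha> u y m - gamma_seq \<alpha> u x n) \<le> r/4 + r/4"
        by (rule norm_diff_triangle_le[OF less_imp_le[OF a] b2])
      then have "norm (gamma_seq \<alpha> u x m - gamma_seq \<alpha> u x n) \<le> r/4 + (r/4 + r/4)"
        by (rule norm_diff_triangle_le[OF b1])
      then show "norm (gamma_seq \<alpha> u x m - gamma_seq \<alpha> u x n) < r"
        using r by linarith
    qed
  qed
  then show "x \<in> c_GD \<alpha> u" unfolding c_GD_def mem_Collect_eq by (rule Cauchy_convergent)
qed

end

theorem theorem1:
  fixes \<alpha> :: real and u :: "nat \<Rightarrow> 'a::{real_normed_field, banach}"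
  assumes "0 < \<alpha>" and "\<alpha> < 1" and "\<forall>k. u k \<noteq> 0"
  shows "BK_space (c0_GD \<alpha> u) (GD_norm \<alpha> u) \<and> BK_space (c_GD \<alpha> u) (GD_norm \<alpha> u)"
  using BK_c0[OF assms(1,3)] BK_c[OF assms(1,3)] by simp

end
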